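(* For any sets $A_1,A_2\subset\mathbb R^n$ whose Euclidean distance $d:=\inf\{|x-z|:x\in A_1,z\in A_2\}$ is positive, $$c_\alpha(A_1)+c_\alpha(A_2)\le c_\alpha(A_1\cup A_2)\left[1+\frac{\max\{c_\alpha(A_1),c_\alpha(A_2)\}}{d^{\,n-\alpha}}\right].$$
   Context: Standing assumptions: $n\ge3$, $\alpha\in(0,2]$, and $\kappa_\alpha(x,y)=|x-y|^{\alpha-n}$ is the Riesz kernel on $\mathbb R^n$. The energy of a positive Radon measure $\mu$ is $\|\mu\|_\alpha^2=\iint\kappa_\alpha\,d\mu\,d\mu$; $\mathcal E^+_\alpha(A)$ is the set of positive measures of finite energy concentrated on $A$. The inner capacity of $A\subset\mathbb R^n$ is defined by $1/c_\alpha(A)=\inf\{\|\mu\|_\alpha^2:\ \mu\in\mathcal E^+_\alpha(A),\ \mu(\mathbb R^n)=1\}$ (with values in $[0,\infty]$). *)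

theory Defs
  imports "HOL-Analysis.Analysis"
begin

text \<open>Riesz kernel |x-y|^(alpha-n) on R^n, n = DIM('a), with value infinity on the diagonal
  (alpha < n, so the exponent is negative).\<close>
definition riesz_kernel :: "real \<Rightarrow> 'a::euclidean_space \<Rightarrow> 'a \<Rightarrow> ennreal" where
  "riesz_kernel \<alpha> x y =
     (if x = y then \<infinity> else ennreal (dist x y powr (\<alpha> - real DIM('a))))"

definition riesz_energy :: "real \<Rightarrow> 'a::euclidean_space measure \<Rightarrow> ennreal" where
  "riesz_energy \<alpha> \<mu> = (\<integral>\<^sup>+ x. (\<integral>\<^sup>+ y. riesz_kernel \<alpha> x y \<partial>\<mu>) \<partial>\<mu>)"

definition radon_measure :: "'a::euclidean_space measure \<Rightarrow> bool" where
  "radon_measure \<mu> \<longleftrightarrow> sets \<mu> = sets borel \<and> (\<forall>K. compact K \<longrightarrow> emeasure \<mu> K < \<infinity>)"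

definition concentrated_on :: "'a::euclidean_space measure \<Rightarrow> 'a set \<Rightarrow> bool" where
  "concentrated_on \<mu> A \<longleftrightarrow> (\<exists>B \<in> sets borel. B \<subseteq> A \<and> emeasure \<mu> (UNIV - B) = 0)"

definition finite_energy_measures :: "real \<Rightarrow> 'a::euclidean_space set \<Rightarrow> 'a measure set" where
  "finite_energy_measures \<alpha> A =
     {\<mu>. radon_measure \<mu> \<and> concentrated_on \<mu> A \<and> riesz_energy \<alpha> \<mu> < \<infinity>}"

text \<open>Inner capacity: 1/c(A) = inf of energies of unit measures in E^+(A);
  values in [0,\<infinity>] (inverse 0 = \<infinity>, inverse \<infinity> = 0, inf of empty set = \<infinity>).\<close>
definition inner_capacity :: "real \<Rightarrow> 'a::euclidean_space set \<Rightarrow> ennreal" where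
  "inner_capacity \<alpha> A =
     inverse (INF \<mu> \<in> {\<mu> \<in> finite_energy_measures \<alpha> A. emeasure \<mu> UNIV = 1}. riesz_energy \<alpha> \<mu>)"

end

theory Submission
  imports Defs
begin

definition add_measure :: "'a measure \<Rightarrow> 'a measure \<Rightarrow> 'a measure" where
"add_measure M N = measure_of (space M) (sets M) (\<lambda>A. emeasure M A + emeasure N A)"

lemma sets_add_measure[simp, measurable_cong]: "sets (add_measure M N) = sets M"
  by (simp add: add_measure_def)

lemma space_add_measure: "space (add_measure M N) = space M"
  by (simp add: add_measure_def)

lemma emeasure_add_measure:
  assumes "sets N = sets M"
  shows "emeasure (add_measure M N) A = emeasure M A + emeasure N A"
  (is "_ = ?\<mu> A")
proof(cases "A \<in> sets M")
  case True
  show ?thesis unfolding add_measure_def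
  proof(rule emeasure_measure_of_sigma)
    show "sigma_algebra (space M) (sets M)" ..
    show "positive (sets M) ?\<mu>" by (simp add: positive_def)
    show "countably_additive (sets M) ?\<mu>"
    proof (rule countably_additiveI)
      fix A :: "nat \<Rightarrow> _"  assume *: "range A \<subseteq> sets M" "disjoint_family A"
      have "(\<Sum>i. ?\<mu> (A i)) = (\<Sum>i. emeasure M (A i)) + (\<Sum>i. emeasure N (A i))"
        by (simp add: suminf_add)
      also have "\<dots> = ?\<mu> (\<Union>i. A i)" using * assms by(simp add: suminf_emeasure)
      finally show "(\<Sum>i. ?\<mu> (A i)) = ?\<mu> (\<Union>i. A i)" .
    qed
  qed(fact True)
qed(simp add: emeasure_notin_sets assms)

lemma meas_sets: "sets M' = sets M \<Longrightarrow> f \<in> borel_measurable M \<Longrightarrow> f \<in> borel_measurable M'"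
  using measurable_cong_sets[of M' M borel borel] by blast

lemma nn_integral_add_measure:
  assumes N: "sets N = sets M" and f: "f \<in> borel_measurable M"
  shows "nn_integral (add_measure M N) f = nn_integral M f + nn_integral N f"
  using f
proof (induction rule: borel_measurable_induct)
  case (cong f g)
  have spN: "space N = space M" using N by (rule sets_eq_imp_space_eq)
  have spA: "space (add_measure M N) = space M" by (rule space_add_measure)
  have "nn_integral (add_measure M N) f = nn_integral (add_measure M N) g"
  proof (rule nn_integral_cong)
    fix x assume "x \<in> space (add_measure M N)"
    then have "x \<in> space M" by (simp only: spA)
    then show "f x = g x" by (rule cong.hyps(3))
  qed
  moreover have "nn_integral M f = nn_integral M g"
    by (rule nn_integral_cong) (rule cong.hyps(3))
  moreover have "nn_integral N f = nn_integral N g"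
  proof (rule nn_integral_cong)
    fix x assume "x \<in> space N"
    then have "x \<in> space M" by (simp only: spN)
    then show "f x = g x" by (rule cong.hyps(3))
  qed
  ultimately show ?case using cong.IH by (simp only:)
next
  case (set A)
  have A1: "A \<in> sets (add_measure M N)" "A \<in> sets N" using set N by simp_all
  show ?case
    by (simp only: nn_integral_indicator[OF A1(1)] nn_integral_indicator[OF A1(2)] nn_integral_indicator[OF set] emeasure_add_measure[OF N])
next
  case (mult u c)
  have "u \<in> borel_measurable N" using N mult.hyps(2) by (rule meas_sets)
  then have "nn_integral N (\<lambda>x. c * u x) = c * nn_integral N u" by (rule nn_integral_cmult)
  moreover have "nn_integral M (\<lambda>x. c * u x) = c * nn_integral M u" using mult.hyps(2) by (rule nn_integral_cmult)
  moreover have "nn_integral (add_measure M N) (\<lambda>x. c * u x) = c * nn_integral (add_measure M N) u"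
    using mult.hyps(2) by (intro nn_integral_cmult meas_sets[OF sets_add_measure])
  ultimately show ?case using mult.IH by (simp add: distrib_left)
next
  case (add u v)
  have uN: "u \<in> borel_measurable N" "v \<in> borel_measurable N" using add.hyps N by (auto intro: meas_sets)
  have uA: "u \<in> borel_measurable (add_measure M N)" "v \<in> borel_measurable (add_measure M N)"
    using add.hyps by (auto intro: meas_sets[OF sets_add_measure])
  have "nn_integral N (\<lambda>x. v x + u x) = nn_integral N v + nn_integral N u" using uN by (intro nn_integral_add) auto
  moreover have "nn_integral M (\<lambda>x. v x + u x) = nn_integral M v + nn_integral M u" using add.hyps by (intro nn_integral_add) auto
  moreover have "nn_integral (add_measure M N) (\<lambda>x. v x + u x) = nn_integral (add_measure M N) v + nn_integral (add_measure M N) u"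
    using uA by (intro nn_integral_add) auto
  ultimately show ?case using add.IH by (simp add: algebra_simps)
next
  case (seq U)
  have UN: "\<And>i. U i \<in> borel_measurable N" using seq.hyps(1) N by (auto intro: meas_sets)
  have UA: "\<And>i. U i \<in> borel_measurable (add_measure M N)" using seq.hyps(1) by (auto intro: meas_sets[OF sets_add_measure])
  have e: "(SUP i. U i) = (\<lambda>x. SUP i. U i x)" by (simp add: fun_eq_iff image_comp)
  have "nn_integral (add_measure M N) (\<lambda>x. SUP i. U i x) = (SUP i. nn_integral (add_measure M N) (U i))"
    by (rule nn_integral_monotone_convergence_SUP[OF seq.hyps(3) UA])
  also have "\<dots> = (SUP i. nn_integral M (U i) + nn_integral N (U i))" using seq.IH by simp
  also have "\<dots> = (SUP i. nn_integral M (U i)) + (SUP i. nn_integral N (U i))"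
    by (rule ennreal_SUP_add) (simp_all add: incseq_nn_integral seq.hyps(3))
  also have "\<dots> = nn_integral M (\<lambda>x. SUP i. U i x) + nn_integral N (\<lambda>x. SUP i. U i x)"
    using nn_integral_monotone_convergence_SUP[OF seq.hyps(3) seq.hyps(1)]
      nn_integral_monotone_convergence_SUP[OF seq.hyps(3) UN] by simp
  finally show ?case unfolding e .
qed

lemma kernel_meas: "(\<lambda>p. riesz_kernel \<alpha> (fst p) (snd p)) \<in> borel_measurable (borel \<Otimes>\<^sub>M (borel :: 'a::euclidean_space measure))"
proof -
  have "closed {p::'a\<times>'a. fst p = snd p}"
    by (intro closed_Collect_eq continuous_intros)
  then have "{p::'a\<times>'a. fst p = snd p} \<in> sets borel" by (rule borel_closed)
  then have D[measurable]: "{p \<in> space (borel \<Otimes>\<^sub>M borel). fst p = snd p} \<in> sets (borel \<Otimes>\<^sub>M (borel :: 'a measure))"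
    unfolding borel_prod by simp
  show ?thesis
    unfolding riesz_kernel_def by measurable
qed


lemma conc_AE:
  assumes "concentrated_on \<mu> A" "sets \<mu> = sets borel"
  obtains B where "B \<in> sets borel" "B \<subseteq> A" "emeasure \<mu> (UNIV - B) = 0" "AE x in \<mu>. x \<in> B"
proof -
  obtain B where B: "B \<in> sets borel" "B \<subseteq> A" "emeasure \<mu> (UNIV - B) = 0"
    using assms(1) unfolding concentrated_on_def by blast
  have sp: "space \<mu> = UNIV" using assms(2) sets_eq_imp_space_eq by fastforce
  have "UNIV - B \<in> null_sets \<mu>" using B assms(2) by (auto intro!: null_setsI)
  then have "AE x in \<mu>. x \<in> B" by (rule AE_I') (auto simp: sp)
  then show ?thesis using that B by blast
qed

lemma cross_bound:
  fixes \<mu>1 \<mu>2 :: "'a::euclidean_space measure"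
  assumes \<alpha>: "\<alpha> < real DIM('a)" and d: "setdist A1 A2 > 0"
    and c1: "concentrated_on \<mu>1 A1" "sets \<mu>1 = sets borel" "emeasure \<mu>1 UNIV = 1"
    and c2: "concentrated_on \<mu>2 A2" "sets \<mu>2 = sets borel" "emeasure \<mu>2 UNIV = 1"
  shows "(\<integral>\<^sup>+ x. (\<integral>\<^sup>+ y. riesz_kernel \<alpha> x y \<partial>\<mu>2) \<partial>\<mu>1) \<le> ennreal (setdist A1 A2 powr (\<alpha> - real DIM('a)))"
proof -
  define D where "D = ennreal (setdist A1 A2 powr (\<alpha> - real DIM('a)))"
  obtain B1 where B1: "B1 \<subseteq> A1" "AE x in \<mu>1. x \<in> B1" using conc_AE[OF c1(1,2)] by blast
  obtain B2 where B2: "B2 \<subseteq> A2" "AE x in \<mu>2. x \<in> B2" using conc_AE[OF c2(1,2)] by blast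
  have sp1: "space \<mu>1 = UNIV" using c1(2) sets_eq_imp_space_eq by fastforce
  have sp2: "space \<mu>2 = UNIV" using c2(2) sets_eq_imp_space_eq by fastforce
  have K: "riesz_kernel \<alpha> x y \<le> D" if "x \<in> A1" "y \<in> A2" for x y
  proof -
    have "setdist A1 A2 \<le> dist x y" using that by (rule setdist_le_dist)
    then have "x \<noteq> y" "dist x y powr (\<alpha> - real DIM('a)) \<le> setdist A1 A2 powr (\<alpha> - real DIM('a))"
      using d \<alpha> by (auto intro!: powr_mono2')
    then show ?thesis unfolding riesz_kernel_def D_def by (simp add: ennreal_leI)
  qed
  have inner: "(\<integral>\<^sup>+ y. riesz_kernel \<alpha> x y \<partial>\<mu>2) \<le> D" if "x \<in> B1" for x
  proof -
    have "(\<integral>\<^sup>+ y. riesz_kernel \<alpha> x y \<partial>\<mu>2) \<le> (\<integral>\<^sup>+ y. D \<partial>\<mu>2)"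
    proof (rule nn_integral_mono_AE)
      show "AE y in \<mu>2. riesz_kernel \<alpha> x y \<le> D"
        using B2(2) by eventually_elim (use K that B1 B2 in auto)
    qed
    also have "\<dots> = D" using c2(3) sp2 by simp
    finally show ?thesis .
  qed
  have "(\<integral>\<^sup>+ x. (\<integral>\<^sup>+ y. riesz_kernel \<alpha> x y \<partial>\<mu>2) \<partial>\<mu>1) \<le> (\<integral>\<^sup>+ x. D \<partial>\<mu>1)"
  proof (rule nn_integral_mono_AE)
    show "AE x in \<mu>1. (\<integral>\<^sup>+ y. riesz_kernel \<alpha> x y \<partial>\<mu>2) \<le> D"
      using B1(2) by eventually_elim (use inner in auto)
  qed
  also have "\<dots> = D" using c1(3) sp1 by simp
  finally show ?thesis unfolding D_def .
qed


lemma kernel_meas_y: "(\<lambda>y. riesz_kernel \<alpha> x y) \<in> borel_measurable (borel :: 'a::euclidean_space measure)"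
  using measurable_compose_Pair1[OF _ kernel_meas[of \<alpha>], of x] by simp

lemma F_meas:
  fixes \<mu> :: "'a::euclidean_space measure"
  assumes "sets \<mu> = sets borel" "emeasure \<mu> UNIV = 1"
  shows "(\<lambda>x. \<integral>\<^sup>+ y. riesz_kernel \<alpha> x y \<partial>\<mu>) \<in> borel_measurable borel"
proof -
  have sp: "space \<mu> = UNIV" using assms(1) sets_eq_imp_space_eq by fastforce
  interpret finite_measure \<mu> by (rule finite_measureI) (simp add: sp assms)
  have "(\<lambda>p. riesz_kernel \<alpha> (fst p) (snd p)) \<in> borel_measurable (borel \<Otimes>\<^sub>M \<mu>)"
    using kernel_meas[of \<alpha>] by (subst measurable_cong_sets[OF sets_pair_measure_cong[OF refl assms(1)] refl]) 
  from borel_measurable_nn_integral_fst[OF this] show ?thesis by simp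
qed

lemma combine:
  fixes \<mu>1 \<mu>2 :: "'a::euclidean_space measure"
  assumes \<alpha>: "\<alpha> < real DIM('a)" and d: "setdist A1 A2 > 0"
    and m1: "\<mu>1 \<in> finite_energy_measures \<alpha> A1" "emeasure \<mu>1 UNIV = 1"
    and m2: "\<mu>2 \<in> finite_energy_measures \<alpha> A2" "emeasure \<mu>2 UNIV = 1"
    and s: "0 \<le> s1" "0 \<le> s2" "s1 + s2 = 1"
    and E1: "riesz_energy \<alpha> \<mu>1 \<le> ennreal a1" and E2: "riesz_energy \<alpha> \<mu>2 \<le> ennreal a2"
    and a: "0 \<le> a1" "0 \<le> a2"
  shows "\<exists>\<nu>\<in>finite_energy_measures \<alpha> (A1 \<union> A2). emeasure \<nu> UNIV = 1 \<and>
     riesz_energy \<alpha> \<nu> \<le> ennreal (s1 * s1 * a1 + s2 * s2 * a2 + 2 * s1 * s2 * (setdist A1 A2 powr (\<alpha> - real DIM('a))))"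
proof -
  define D where "D = setdist A1 A2 powr (\<alpha> - real DIM('a))"
  have D0: "0 \<le> D" unfolding D_def by simp
  have r1: "radon_measure \<mu>1" "concentrated_on \<mu>1 A1" "riesz_energy \<alpha> \<mu>1 < \<infinity>"
    and r2: "radon_measure \<mu>2" "concentrated_on \<mu>2 A2" "riesz_energy \<alpha> \<mu>2 < \<infinity>"
    using m1 m2 unfolding finite_energy_measures_def by auto
  have S1: "sets \<mu>1 = sets borel" and S2: "sets \<mu>2 = sets borel"
    using r1 r2 unfolding radon_measure_def by auto
  have sp1: "space \<mu>1 = UNIV" using S1 sets_eq_imp_space_eq by fastforce
  have sp2: "space \<mu>2 = UNIV" using S2 sets_eq_imp_space_eq by fastforce
  define \<nu> where "\<nu> = add_measure (scale_measure (ennreal s1) \<mu>1) (scale_measure (ennreal s2) \<mu>2)"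
  have Sn: "sets \<nu> = sets borel" unfolding \<nu>_def using S1 by simp
  have em: "emeasure \<nu> A = ennreal s1 * emeasure \<mu>1 A + ennreal s2 * emeasure \<mu>2 A" for A
    unfolding \<nu>_def by (subst emeasure_add_measure) (simp_all add: S1 S2)
  have unit: "emeasure \<nu> UNIV = 1"
    using s by (simp add: em m1(2) m2(2) ennreal_plus[symmetric] del: ennreal_plus)
  have radon: "radon_measure \<nu>"
    unfolding radon_measure_def
  proof (intro conjI allI impI Sn)
    fix K :: "'a set" assume "compact K"
    then have "emeasure \<mu>1 K < \<infinity>" "emeasure \<mu>2 K < \<infinity>" using r1 r2 unfolding radon_measure_def by auto
    then show "emeasure \<nu> K < \<infinity>" by (simp add: em ennreal_mult_less_top)
  qed
  obtain B1 where B1: "B1 \<in> sets borel" "B1 \<subseteq> A1" "emeasure \<mu>1 (UNIV - B1) = 0"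
    using r1(2) unfolding concentrated_on_def by blast
  obtain B2 where B2: "B2 \<in> sets borel" "B2 \<subseteq> A2" "emeasure \<mu>2 (UNIV - B2) = 0"
    using r2(2) unfolding concentrated_on_def by blast
  have "emeasure \<mu>1 (UNIV - (B1 \<union> B2)) \<le> emeasure \<mu>1 (UNIV - B1)"
    by (rule emeasure_mono) (use B1 S1 in auto)
  moreover have "emeasure \<mu>2 (UNIV - (B1 \<union> B2)) \<le> emeasure \<mu>2 (UNIV - B2)"
    by (rule emeasure_mono) (use B2 S2 in auto)
  ultimately have "emeasure \<nu> (UNIV - (B1 \<union> B2)) = 0" using B1 B2 by (simp add: em)
  then have conc: "concentrated_on \<nu> (A1 \<union> A2)"
    unfolding concentrated_on_def using B1 B2 by (intro bexI[of _ "B1 \<union> B2"]) auto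
  define F1 where "F1 x = (\<integral>\<^sup>+ y. riesz_kernel \<alpha> x y \<partial>\<mu>1)" for x
  define F2 where "F2 x = (\<integral>\<^sup>+ y. riesz_kernel \<alpha> x y \<partial>\<mu>2)" for x
  have F1m: "F1 \<in> borel_measurable borel" unfolding F1_def by (rule F_meas[OF S1 m1(2)])
  have F2m: "F2 \<in> borel_measurable borel" unfolding F2_def by (rule F_meas[OF S2 m2(2)])
  have addint: "(\<integral>\<^sup>+ x. f x \<partial>\<nu>) = ennreal s1 * (\<integral>\<^sup>+ x. f x \<partial>\<mu>1) + ennreal s2 * (\<integral>\<^sup>+ x. f x \<partial>\<mu>2)"
    if f: "f \<in> borel_measurable borel" for f
  proof -
    have f1: "f \<in> borel_measurable \<mu>1" "f \<in> borel_measurable \<mu>2"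
      using f S1 S2 by (auto intro: meas_sets)
    show ?thesis unfolding \<nu>_def
      by (subst nn_integral_add_measure) (simp_all add: S1 S2 f1 nn_integral_scale_measure meas_sets[OF sets_scale_measure])
  qed
  have inner: "(\<integral>\<^sup>+ y. riesz_kernel \<alpha> x y \<partial>\<nu>) = ennreal s1 * F1 x + ennreal s2 * F2 x" for x
    unfolding F1_def F2_def by (rule addint[OF kernel_meas_y])
  have en: "riesz_energy \<alpha> \<nu> = ennreal s1 * (ennreal s1 * riesz_energy \<alpha> \<mu>1 + ennreal s2 * (\<integral>\<^sup>+ x. F2 x \<partial>\<mu>1))
      + ennreal s2 * (ennreal s1 * (\<integral>\<^sup>+ x. F1 x \<partial>\<mu>2) + ennreal s2 * riesz_energy \<alpha> \<mu>2)"
  proof -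
    have mm: "(\<lambda>x. ennreal s1 * F1 x + ennreal s2 * F2 x) \<in> borel_measurable borel"
      using F1m F2m by measurable
    have F1m': "F1 \<in> borel_measurable \<mu>1" "F1 \<in> borel_measurable \<mu>2"
      and F2m': "F2 \<in> borel_measurable \<mu>1" "F2 \<in> borel_measurable \<mu>2"
      using F1m F2m S1 S2 by (auto intro: meas_sets)
    have lin: "(\<integral>\<^sup>+ x. ennreal s1 * F1 x + ennreal s2 * F2 x \<partial>M) = ennreal s1 * (\<integral>\<^sup>+ x. F1 x \<partial>M) + ennreal s2 * (\<integral>\<^sup>+ x. F2 x \<partial>M)"
      if "F1 \<in> borel_measurable M" "F2 \<in> borel_measurable M" for M
    proof -
      have "(\<lambda>x. ennreal s1 * F1 x) \<in> borel_measurable M" "(\<lambda>x. ennreal s2 * F2 x) \<in> borel_measurable M"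
        using that by measurable
      then have "(\<integral>\<^sup>+ x. ennreal s1 * F1 x + ennreal s2 * F2 x \<partial>M) = (\<integral>\<^sup>+ x. ennreal s1 * F1 x \<partial>M) + (\<integral>\<^sup>+ x. ennreal s2 * F2 x \<partial>M)"
        by (rule nn_integral_add)
      also have "\<dots> = ennreal s1 * (\<integral>\<^sup>+ x. F1 x \<partial>M) + ennreal s2 * (\<integral>\<^sup>+ x. F2 x \<partial>M)"
        using that by (simp add: nn_integral_cmult)
      finally show ?thesis .
    qed
    have "riesz_energy \<alpha> \<nu> = (\<integral>\<^sup>+ x. ennreal s1 * F1 x + ennreal s2 * F2 x \<partial>\<nu>)"
      unfolding riesz_energy_def inner ..
    also have "\<dots> = ennreal s1 * (\<integral>\<^sup>+ x. ennreal s1 * F1 x + ennreal s2 * F2 x \<partial>\<mu>1) + ennreal s2 * (\<integral>\<^sup>+ x. ennreal s1 * F1 x + ennreal s2 * F2 x \<partial>\<mu>2)"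
      by (rule addint[OF mm])
    also have "\<dots> = ennreal s1 * (ennreal s1 * (\<integral>\<^sup>+ x. F1 x \<partial>\<mu>1) + ennreal s2 * (\<integral>\<^sup>+ x. F2 x \<partial>\<mu>1)) + ennreal s2 * (ennreal s1 * (\<integral>\<^sup>+ x. F1 x \<partial>\<mu>2) + ennreal s2 * (\<integral>\<^sup>+ x. F2 x \<partial>\<mu>2))"
      by (simp only: lin[OF F1m'(1) F2m'(1)] lin[OF F1m'(2) F2m'(2)])
    also have "(\<integral>\<^sup>+ x. F1 x \<partial>\<mu>1) = riesz_energy \<alpha> \<mu>1" unfolding riesz_energy_def F1_def ..
    also have "(\<integral>\<^sup>+ x. F2 x \<partial>\<mu>2) = riesz_energy \<alpha> \<mu>2" unfolding riesz_energy_def F2_def ..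
    finally show ?thesis .
  qed
  have X1: "(\<integral>\<^sup>+ x. F2 x \<partial>\<mu>1) \<le> ennreal D"
    unfolding F2_def D_def by (rule cross_bound[OF \<alpha> d r1(2) S1 m1(2) r2(2) S2 m2(2)])
  have X2: "(\<integral>\<^sup>+ x. F1 x \<partial>\<mu>2) \<le> ennreal D"
  proof -
    have "(\<integral>\<^sup>+ x. F1 x \<partial>\<mu>2) \<le> ennreal (setdist A2 A1 powr (\<alpha> - real DIM('a)))"
      unfolding F1_def by (rule cross_bound[OF \<alpha> _ r2(2) S2 m2(2) r1(2) S1 m1(2)]) (metis d setdist_sym)
    then show ?thesis unfolding D_def by (simp add: setdist_sym)
  qed
  have "riesz_energy \<alpha> \<nu> \<le> ennreal s1 * (ennreal s1 * ennreal a1 + ennreal s2 * ennreal D)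
      + ennreal s2 * (ennreal s1 * ennreal D + ennreal s2 * ennreal a2)"
    unfolding en by (intro add_mono mult_left_mono E1 E2 X1 X2) auto
  also have "\<dots> = ennreal (s1 * (s1 * a1 + s2 * D) + s2 * (s1 * D + s2 * a2))"
  proof -
    have n: "0 \<le> s1 * a1" "0 \<le> s2 * D" "0 \<le> s1 * D" "0 \<le> s2 * a2"
      using s a D0 by simp_all
    have n2: "0 \<le> s1 * a1 + s2 * D" "0 \<le> s1 * D + s2 * a2" using n by simp_all
    have n3: "0 \<le> s1 * (s1 * a1 + s2 * D)" "0 \<le> s2 * (s1 * D + s2 * a2)" using n2 s by simp_all
    show ?thesis
      by (simp only: ennreal_plus[OF n3] ennreal_mult[OF s(1) n2(1)] ennreal_mult[OF s(2) n2(2)]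
          ennreal_plus[OF n(1,2)] ennreal_plus[OF n(3,4)] ennreal_mult[OF s(1) a(1)] ennreal_mult[OF s(2) D0]
          ennreal_mult[OF s(1) D0] ennreal_mult[OF s(2) a(2)])
  qed
  also have "s1 * (s1 * a1 + s2 * D) + s2 * (s1 * D + s2 * a2) = s1 * s1 * a1 + s2 * s2 * a2 + 2 * s1 * s2 * D"
    by (simp add: algebra_simps)
  finally have bound: "riesz_energy \<alpha> \<nu> \<le> ennreal (s1 * s1 * a1 + s2 * s2 * a2 + 2 * s1 * s2 * D)" .
  then have "riesz_energy \<alpha> \<nu> < \<infinity>" using le_less_trans by fastforce
  then have "\<nu> \<in> finite_energy_measures \<alpha> (A1 \<union> A2)"
    unfolding finite_energy_measures_def using radon conc by auto
  then show ?thesis using unit bound unfolding D_def by blast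
qed


lemma ennreal_inverse_antimono: "(x::ennreal) \<le> y \<Longrightarrow> inverse y \<le> inverse x"
proof (cases "y = top \<or> x = 0")
  case True then show ?thesis by auto
next
  case False
  assume xy: "x \<le> y"
  obtain a where a: "x = ennreal a" "0 < a" using False xy
    by (cases x rule: ennreal_cases) (auto simp: top_unique)
  obtain b where b: "y = ennreal b" "0 < b" using False xy a
    by (cases y rule: ennreal_cases) auto
  have "a \<le> b" using xy a b by simp
  then show ?thesis using a b by (simp add: inverse_ennreal ennreal_leI le_imp_inverse_le)
qed

lemma ennreal_inverse_inverse: "inverse (inverse (x::ennreal)) = x"
proof (cases x rule: ennreal_cases)
  case (real r)
  then show ?thesis by (cases "r = 0") (auto simp: inverse_ennreal)
qed simp

lemma real_key:
  fixes r1 r2 D :: real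
  assumes "0 < r1" "0 < r2" "0 \<le> D"
  defines "s1 \<equiv> r1 / (r1 + r2)" and "s2 \<equiv> r2 / (r1 + r2)"
  shows "r1 + r2 \<le> (1 / (s1 * s1 / r1 + s2 * s2 / r2 + 2 * s1 * s2 * D)) * (1 + max r1 r2 * D)"
proof -
  define q where "q = r1 + r2"
  have q: "0 < q" unfolding q_def using assms by simp
  have r1n: "r1 \<noteq> 0" and r2n: "r2 \<noteq> 0" and qn: "q \<noteq> 0" using assms q by auto
  define X where "X = s1 * s1 / r1 + s2 * s2 / r2 + 2 * s1 * s2 * D"
  have a: "s1 * s1 / r1 * q = r1 / q" unfolding s1_def q_def[symmetric] using r1n qn by (simp add: field_simps)
  have b: "s2 * s2 / r2 * q = r2 / q" unfolding s2_def q_def[symmetric] using r2n qn by (simp add: field_simps)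
  have c: "2 * s1 * s2 * D * q = 2 * r1 * r2 * D / q" unfolding s1_def s2_def q_def[symmetric] using qn by (simp add: field_simps)
  have "X * q = r1 / q + r2 / q + 2 * r1 * r2 * D / q"
    unfolding X_def distrib_right a b c ..
  also have "r1 / q + r2 / q = 1" using qn unfolding q_def by (simp add: add_divide_distrib[symmetric])
  finally have X: "X * q = 1 + 2 * r1 * r2 * D / q" .
  have s0: "0 \<le> s1" "0 \<le> s2" unfolding s1_def s2_def using assms by auto
  have Xp: "0 < X" unfolding X_def using assms s0 s1_def
    by (intro add_pos_nonneg) (auto intro!: mult_nonneg_nonneg)
  have m: "2 * r1 * r2 \<le> max r1 r2 * q"
  proof (cases "r1 \<le> r2")
    case True
    then have "r1 * r2 \<le> r2 * r2" using assms by (intro mult_right_mono) auto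
    then show ?thesis using True unfolding q_def by (simp add: max_def algebra_simps)
  next
    case False
    then have "r1 * r2 \<le> r1 * r1" using assms by (intro mult_left_mono) auto
    then show ?thesis using False unfolding q_def by (simp add: max_def algebra_simps)
  qed
  have "2 * r1 * r2 * D / q \<le> max r1 r2 * D"
  proof -
    have "2 * r1 * r2 * D \<le> max r1 r2 * q * D" using m assms by (intro mult_right_mono) auto
    then show ?thesis using q by (simp add: divide_le_eq mult.commute mult.left_commute)
  qed
  then have Xq: "X * q \<le> 1 + max r1 r2 * D" using X by simp
  have "q \<le> (1 + max r1 r2 * D) / X" using Xq Xp by (simp add: le_divide_eq mult.commute)
  then show ?thesis unfolding X_def[symmetric] q_def by simp
qed

theorem mainTheorem5:
  fixes A\<^sub>1 A\<^sub>2 :: "'a::euclidean_space set" and \<alpha> :: real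
  assumes "DIM('a) \<ge> 3" and "0 < \<alpha>" and "\<alpha> \<le> 2"
    and "setdist A\<^sub>1 A\<^sub>2 > 0"
  shows "inner_capacity \<alpha> A\<^sub>1 + inner_capacity \<alpha> A\<^sub>2
    \<le> inner_capacity \<alpha> (A\<^sub>1 \<union> A\<^sub>2) *
       (1 + max (inner_capacity \<alpha> A\<^sub>1) (inner_capacity \<alpha> A\<^sub>2)
            / ennreal (setdist A\<^sub>1 A\<^sub>2 powr (real DIM('a) - \<alpha>)))"
proof -
  have \<alpha>n: "\<alpha> < real DIM('a)" using assms by linarith
  define d where "d = setdist A\<^sub>1 A\<^sub>2"
  have d0: "0 < d" using assms unfolding d_def by simp
  define I where "I A = (INF \<mu> \<in> {\<mu> \<in> finite_energy_measures \<alpha> A. emeasure \<mu> UNIV = 1}. riesz_energy \<alpha> \<mu>)" for A :: "'a set"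
  have cI: "inner_capacity \<alpha> A = inverse (I A)" for A unfolding inner_capacity_def I_def ..
  have Imono: "I (A\<^sub>1 \<union> A\<^sub>2) \<le> I A" if "A \<subseteq> A\<^sub>1 \<union> A\<^sub>2" for A
  proof -
    have "finite_energy_measures \<alpha> A \<subseteq> finite_energy_measures \<alpha> (A\<^sub>1 \<union> A\<^sub>2)"
      unfolding finite_energy_measures_def concentrated_on_def using that by blast
    then show ?thesis unfolding I_def by (intro INF_superset_mono) auto
  qed
  define c1 where "c1 = inner_capacity \<alpha> A\<^sub>1"
  define c2 where "c2 = inner_capacity \<alpha> A\<^sub>2"
  define C where "C = inner_capacity \<alpha> (A\<^sub>1 \<union> A\<^sub>2)"
  define P where "P = d powr (real DIM('a) - \<alpha>)"
  have P0: "0 < P" unfolding P_def using d0 by simp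
  define Fct where "Fct = 1 + max c1 c2 / ennreal P"
  have C1: "c1 \<le> C" and C2: "c2 \<le> C"
    unfolding c1_def c2_def C_def cI by (auto intro!: ennreal_inverse_antimono Imono)
  have F1: "1 \<le> Fct" unfolding Fct_def by simp
  have CF: "C \<le> C * Fct" using mult_left_mono[OF F1, of C] by simp
  have goal: "c1 + c2 \<le> C * Fct"
  proof (cases "c1 = 0 \<or> c2 = 0")
    case True
    then show ?thesis using C1 C2 CF by auto
  next
    case False
    note nz = False
    show ?thesis
    proof (cases "c1 = top \<or> c2 = top")
      case True
      then have "C = top" using C1 C2 by (auto simp: top_unique)
      moreover have "Fct \<noteq> 0" using F1 by auto
      ultimately show ?thesis by (simp add: ennreal_mult_eq_top_iff)
    next
      case False
      obtain r1 where r1: "c1 = ennreal r1" "0 < r1" using False nz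
        by (cases c1 rule: ennreal_cases) auto
      obtain r2 where r2: "c2 = ennreal r2" "0 < r2" using False nz
        by (cases c2 rule: ennreal_cases) auto
      have I1: "I A\<^sub>1 = ennreal (1 / r1)"
        using arg_cong[OF c1_def[unfolded cI], of inverse] r1 by (simp add: ennreal_inverse_inverse inverse_ennreal divide_inverse)
      have I2: "I A\<^sub>2 = ennreal (1 / r2)"
        using arg_cong[OF c2_def[unfolded cI], of inverse] r2 by (simp add: ennreal_inverse_inverse inverse_ennreal divide_inverse)
      define D where "D = d powr (\<alpha> - real DIM('a))"
      have D0: "0 \<le> D" unfolding D_def by simp
      have DP: "D = 1 / P" unfolding D_def P_def
        by (simp add: powr_minus_divide[symmetric] )
      define s1 where "s1 = r1 / (r1 + r2)"
      define s2 where "s2 = r2 / (r1 + r2)"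
      have s: "0 \<le> s1" "0 \<le> s2" "s1 + s2 = 1" unfolding s1_def s2_def using r1 r2
        by (auto simp: add_divide_distrib[symmetric])
      define X where "X = s1 * s1 / r1 + s2 * s2 / r2 + 2 * s1 * s2 * D"
      have Xp: "0 < X" unfolding X_def using s r1 r2 D0 \<open>s1 + s2 = 1\<close>
        unfolding s1_def by (intro add_pos_nonneg) (auto intro!: mult_nonneg_nonneg)
      have IX: "I (A\<^sub>1 \<union> A\<^sub>2) \<le> ennreal X"
      proof (rule ennreal_le_epsilon)
        fix e :: real assume e: "0 < e"
        have "I A\<^sub>1 < ennreal (1 / r1 + e)" unfolding I1 using e r1 by (simp add: ennreal_lessI)
        then obtain \<mu>1 where \<mu>1: "\<mu>1 \<in> finite_energy_measures \<alpha> A\<^sub>1" "emeasure \<mu>1 UNIV = 1"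
          "riesz_energy \<alpha> \<mu>1 < ennreal (1 / r1 + e)"
          unfolding I_def INF_less_iff by auto
        have "I A\<^sub>2 < ennreal (1 / r2 + e)" unfolding I2 using e r2 by (simp add: ennreal_lessI)
        then obtain \<mu>2 where \<mu>2: "\<mu>2 \<in> finite_energy_measures \<alpha> A\<^sub>2" "emeasure \<mu>2 UNIV = 1"
          "riesz_energy \<alpha> \<mu>2 < ennreal (1 / r2 + e)"
          unfolding I_def INF_less_iff by auto
        obtain \<nu> where \<nu>: "\<nu> \<in> finite_energy_measures \<alpha> (A\<^sub>1 \<union> A\<^sub>2)" "emeasure \<nu> UNIV = 1"
          "riesz_energy \<alpha> \<nu> \<le> ennreal (s1 * s1 * (1 / r1 + e) + s2 * s2 * (1 / r2 + e) + 2 * s1 * s2 * D)"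
          using combine[OF \<alpha>n assms(4) \<mu>1(1,2) \<mu>2(1,2) s less_imp_le[OF \<mu>1(3)] less_imp_le[OF \<mu>2(3)]]
            r1 r2 e unfolding D_def d_def by auto
        have "I (A\<^sub>1 \<union> A\<^sub>2) \<le> riesz_energy \<alpha> \<nu>" unfolding I_def using \<nu> by (auto intro!: INF_lower)
        also have "\<dots> \<le> ennreal (s1 * s1 * (1 / r1 + e) + s2 * s2 * (1 / r2 + e) + 2 * s1 * s2 * D)" by (rule \<nu>(3))
        also have "\<dots> \<le> ennreal (X + e)"
        proof (rule ennreal_leI)
          have "0 \<le> s1 * s2" using s by simp
          then have "s1 * s1 + s2 * s2 \<le> (s1 + s2) * (s1 + s2)" by (simp add: algebra_simps)
          then have "(s1 * s1 + s2 * s2) * e \<le> e" using s e by (simp add: mult_le_cancel_right1)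
          then show "s1 * s1 * (1 / r1 + e) + s2 * s2 * (1 / r2 + e) + 2 * s1 * s2 * D \<le> X + e"
            unfolding X_def by (simp add: algebra_simps)
        qed
        also have "\<dots> = ennreal X + ennreal e" using Xp e by (simp add: ennreal_plus)
        finally show "I (A\<^sub>1 \<union> A\<^sub>2) \<le> ennreal X + ennreal e" .
      qed
      have CX: "ennreal (1 / X) \<le> C"
        unfolding C_def cI using ennreal_inverse_antimono[OF IX] Xp by (simp add: inverse_ennreal divide_inverse)
      have Fe: "Fct = ennreal (1 + max r1 r2 * D)"
      proof -
        have "max c1 c2 = ennreal (max r1 r2)" using r1 r2 by (cases "r1 \<le> r2") (auto simp: max_def ennreal_leI)
        then have "max c1 c2 / ennreal P = ennreal (max r1 r2 * D)"
          using P0 r1 by (simp add: divide_ennreal DP)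
        moreover have "0 \<le> max r1 r2 * D" using D0 r1 by simp
        ultimately show ?thesis unfolding Fct_def by (subst ennreal_plus) auto
      qed
      have "c1 + c2 = ennreal (r1 + r2)" using r1 r2 by (simp add: ennreal_plus)
      also have "\<dots> \<le> ennreal ((1 / X) * (1 + max r1 r2 * D))"
        using real_key[OF r1(2) r2(2) D0] unfolding X_def s1_def s2_def by (simp add: ennreal_leI)
      also have "\<dots> = ennreal (1 / X) * ennreal (1 + max r1 r2 * D)"
        using Xp D0 r1 by (intro ennreal_mult) auto
      also have "\<dots> = ennreal (1 / X) * Fct" by (simp only: Fe)
      also have "\<dots> \<le> C * Fct" by (intro mult_right_mono CX) simp
      finally show ?thesis .
    qed
  qed
  then show ?thesis unfolding c1_def c2_def C_def Fct_def P_def d_def .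
qed

end
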